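(* Every Steiner $3$-regular liner $X$ is $p$-parallel for some $p\in\{0,1\}$. Consequently, $X$ is projective or affine.
   Context: A liner is a set $X$ of points with a family of subsets called lines such that any two distinct points lie in a unique line and every line contains at least two points. For distinct $x,y$, $\overline{xy}$ is the line through them and $\overline{xx}:=\{x\}$. A set is flat if it contains $\overline{xy}$ for all its distinct points; $\overline A$ is the smallest flat containing $A$; the rank $\|A\|$ is the smallest cardinality of $B\subseteq X$ with $A\subseteq\overline B$; a plane is a flat of rank 3. $X$ is Steiner if every line has exactly three points. $X$ is $3$-regular if for every $A\subseteq X$ with $|A|<3$ and points $o\in\overline A$, $p\in X\setminus\overline A$, we have $\overline{\{p\}\cup A}=\bigcup_{u\in\overline{op}}\bigcup_{a\in\overline A}\overline{ua}$. For a cardinal $\kappa$, $X$ is $\kappa$-parallel if for every plane $P$, line $L\subseteq P$ and point $x\in P\setminus L$ there exist exactly $\kappa$ lines $\Lambda$ with $x\in\Lambda\subseteq P\setminus L$. $X$ is projective if for all $o,x,y\in X$, $p\in\overline{xy}$ and $v\in\overline{oy}\setminus\{p\}$ we have $\overline{vp}\cap\overline{ox}\neq\varnothing$. $X$ is affine if for all $o,x,y\in X$ and $p\in\overline{xy}\setminus\overline{ox}$ there exists $u\in\overline{oy}$ such that for every $v\in\overline{oy}$: $u=v$ iff $\overline{vp}\cap\overline{ox}=\varnothing$. *)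

theory Defs
  imports Main
begin

definition liner :: "'a set \<Rightarrow> 'a set set \<Rightarrow> bool" where
  "liner X Ls \<longleftrightarrow>
     (\<forall>l\<in>Ls. l \<subseteq> X \<and> (\<exists>x y. x \<in> l \<and> y \<in> l \<and> x \<noteq> y)) \<and>
     (\<forall>x\<in>X. \<forall>y\<in>X. x \<noteq> y \<longrightarrow> (\<exists>!l. l \<in> Ls \<and> x \<in> l \<and> y \<in> l))"

definition lineth :: "'a set set \<Rightarrow> 'a \<Rightarrow> 'a \<Rightarrow> 'a set" where
  "lineth Ls x y = (if x = y then {x} else (THE l. l \<in> Ls \<and> x \<in> l \<and> y \<in> l))"

definition flat :: "'a set \<Rightarrow> 'a set set \<Rightarrow> 'a set \<Rightarrow> bool" where
  "flat X Ls F \<longleftrightarrow> F \<subseteq> X \<and> (\<forall>x\<in>F. \<forall>y\<in>F. lineth Ls x y \<subseteq> F)"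

definition fhull :: "'a set \<Rightarrow> 'a set set \<Rightarrow> 'a set \<Rightarrow> 'a set" where
  "fhull X Ls A = \<Inter>{F. flat X Ls F \<and> A \<subseteq> F}"

text \<open>The rank of A equals the natural number n: n is the smallest cardinality of
  a set B \<subseteq> X with A \<subseteq> fhull B (infinite B have infinite cardinality, hence larger).\<close>
definition has_rank :: "'a set \<Rightarrow> 'a set set \<Rightarrow> 'a set \<Rightarrow> nat \<Rightarrow> bool" where
  "has_rank X Ls A n \<longleftrightarrow>
     (\<exists>B. B \<subseteq> X \<and> finite B \<and> card B = n \<and> A \<subseteq> fhull X Ls B) \<and>
     (\<forall>B. B \<subseteq> X \<and> finite B \<and> A \<subseteq> fhull X Ls B \<longrightarrow> n \<le> card B)"

definition plane :: "'a set \<Rightarrow> 'a set set \<Rightarrow> 'a set \<Rightarrow> bool" where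
  "plane X Ls P \<longleftrightarrow> flat X Ls P \<and> has_rank X Ls P 3"

definition steiner :: "'a set set \<Rightarrow> bool" where
  "steiner Ls \<longleftrightarrow> (\<forall>l\<in>Ls. finite l \<and> card l = 3)"

definition three_regular :: "'a set \<Rightarrow> 'a set set \<Rightarrow> bool" where
  "three_regular X Ls \<longleftrightarrow>
     (\<forall>A c p. A \<subseteq> X \<and> finite A \<and> card A < 3 \<and> c \<in> fhull X Ls A \<and> p \<in> X - fhull X Ls A \<longrightarrow>
        fhull X Ls (insert p A) =
          (\<Union>u\<in>lineth Ls c p. \<Union>a\<in>fhull X Ls A. lineth Ls u a))"

text \<open>k-parallel for a finite cardinal k.\<close>
definition parallel :: "'a set \<Rightarrow> 'a set set \<Rightarrow> nat \<Rightarrow> bool" where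
  "parallel X Ls k \<longleftrightarrow>
     (\<forall>P L x. plane X Ls P \<and> L \<in> Ls \<and> L \<subseteq> P \<and> x \<in> P - L \<longrightarrow>
        finite {\<Lambda>\<in>Ls. x \<in> \<Lambda> \<and> \<Lambda> \<subseteq> P - L} \<and> card {\<Lambda>\<in>Ls. x \<in> \<Lambda> \<and> \<Lambda> \<subseteq> P - L} = k)"

definition projective :: "'a set \<Rightarrow> 'a set set \<Rightarrow> bool" where
  "projective X Ls \<longleftrightarrow>
     (\<forall>c\<in>X. \<forall>x\<in>X. \<forall>y\<in>X. \<forall>p\<in>lineth Ls x y. \<forall>v\<in>lineth Ls c y - {p}.
        lineth Ls v p \<inter> lineth Ls c x \<noteq> {})"

definition affine :: "'a set \<Rightarrow> 'a set set \<Rightarrow> bool" where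
  "affine X Ls \<longleftrightarrow>
     (\<forall>c\<in>X. \<forall>x\<in>X. \<forall>y\<in>X. \<forall>p\<in>lineth Ls x y - lineth Ls c x.
        (\<exists>u\<in>lineth Ls c y. \<forall>v\<in>lineth Ls c y.
           (u = v \<longleftrightarrow> lineth Ls v p \<inter> lineth Ls c x = {})))"

end

theory Submission
  imports Defs
begin

locale SL =
  fixes X :: "'a set" and Ls :: "'a set set"
  assumes liner: "liner X Ls" and st: "steiner Ls" and reg: "three_regular X Ls"
begin

abbreviation lin where "lin \<equiv> lineth Ls"

lemma liner1: "\<forall>l\<in>Ls. l \<subseteq> X \<and> (\<exists>x y. x \<in> l \<and> y \<in> l \<and> x \<noteq> y)"
  using liner unfolding liner_def by (rule conjunct1)

lemma liner2: "\<forall>x\<in>X. \<forall>y\<in>X. x \<noteq> y \<longrightarrow> (\<exists>!l. l \<in> Ls \<and> x \<in> l \<and> y \<in> l)"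
  using liner unfolding liner_def by (rule conjunct2)

lemma line_sub: "l \<in> Ls \<Longrightarrow> l \<subseteq> X"
  using liner1 by simp

lemma line_card: "l \<in> Ls \<Longrightarrow> finite l \<and> card l = 3"
  using st unfolding steiner_def by simp

lemma ex1_line: "x \<in> X \<Longrightarrow> y \<in> X \<Longrightarrow> x \<noteq> y \<Longrightarrow> \<exists>!l. l \<in> Ls \<and> x \<in> l \<and> y \<in> l"
  using liner2 by simp

lemma lin_refl[simp]: "lin x x = {x}"
  by (simp add: lineth_def)

lemma lin_sym: "lin x y = lin y x"
  unfolding lineth_def by (simp add: conj_commute)

lemma lin_prop: assumes "x \<in> X" "y \<in> X" "x \<noteq> y"
  shows "lin x y \<in> Ls \<and> x \<in> lin x y \<and> y \<in> lin x y"
proof -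
  have "lin x y = (THE l. l \<in> Ls \<and> x \<in> l \<and> y \<in> l)" using assms by (simp add: lineth_def)
  moreover have "(THE l. l \<in> Ls \<and> x \<in> l \<and> y \<in> l) \<in> Ls \<and> x \<in> (THE l. l \<in> Ls \<and> x \<in> l \<and> y \<in> l) \<and> y \<in> (THE l. l \<in> Ls \<and> x \<in> l \<and> y \<in> l)"
    using theI'[OF ex1_line[OF assms]] by blast
  ultimately show ?thesis by simp
qed

lemma lin_uniq: assumes "l \<in> Ls" "x \<in> l" "y \<in> l" "x \<noteq> y"
  shows "lin x y = l"
proof -
  have xy: "x \<in> X" "y \<in> X" using assms line_sub by auto
  have "lin x y = (THE l. l \<in> Ls \<and> x \<in> l \<and> y \<in> l)" using assms by (simp add: lineth_def)
  also have "\<dots> = l" using the1_equality[OF ex1_line[OF xy assms(4)]] assms by blast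
  finally show ?thesis .
qed

lemma lin_X: "x \<in> X \<Longrightarrow> y \<in> X \<Longrightarrow> lin x y \<subseteq> X"
proof (cases "x = y")
  case False
  assume "x \<in> X" "y \<in> X"
  then have "lin x y \<in> Ls" using lin_prop[of x y] False by blast
  then show ?thesis by (rule line_sub)
qed simp


lemma lin_in: "x \<in> lin x y" "y \<in> lin x y" if "x \<in> X" "y \<in> X"
  using lin_prop[of x y] that by (cases "x = y", auto)+

lemma lin_eqI: assumes "l \<in> Ls" "x \<in> l" "y \<in> l" "x \<noteq> y" "m \<in> Ls" "x \<in> m" "y \<in> m"
  shows "l = m"
  using lin_uniq[OF assms(1-4)] lin_uniq[OF assms(5,6,7,4)] by simp

lemma lin_eq2: assumes "x \<in> X" "y \<in> X" "x \<noteq> y" "u \<in> lin x y" "v \<in> lin x y" "u \<noteq> v"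
  shows "lin u v = lin x y"
  using lin_uniq[of "lin x y" u v] lin_prop[OF assms(1-3)] assms by blast

definition t where "t x y = (if x = y then x else (THE z. z \<in> lin x y \<and> z \<noteq> x \<and> z \<noteq> y))"

lemma third_ex: assumes "x \<in> X" "y \<in> X" "x \<noteq> y"
  shows "\<exists>z. lin x y - {x, y} = {z}"
proof -
  have l: "lin x y \<in> Ls" "x \<in> lin x y" "y \<in> lin x y" using lin_prop[OF assms] by auto
  have "card (lin x y - {x,y}) = 1" using line_card[OF l(1)] l assms(3)
    by (subst card_Diff_subset) auto
  then show ?thesis by (meson card_1_singletonE)
qed

lemma t_prop: assumes "x \<in> X" "y \<in> X" "x \<noteq> y"
  shows "lin x y = {x, y, t x y} \<and> t x y \<noteq> x \<and> t x y \<noteq> y"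
proof -
  obtain z where z: "lin x y - {x, y} = {z}" using third_ex[OF assms] by blast
  have "t x y = (THE z. z \<in> lin x y \<and> z \<noteq> x \<and> z \<noteq> y)" using assms by (simp add: t_def)
  also have "\<dots> = z" using z by (intro the_equality) auto
  finally have "t x y = z" .
  moreover have "x \<in> lin x y" "y \<in> lin x y" using lin_prop[OF assms] by auto
  ultimately show ?thesis using z by auto
qed

lemma t_refl[simp]: "t x x = x" by (simp add: t_def)

lemma t_sym: "t x y = t y x"
proof (cases "x = y")
  case False
  have "(\<lambda>z. z \<in> lin x y \<and> z \<noteq> x \<and> z \<noteq> y) = (\<lambda>z. z \<in> lin y x \<and> z \<noteq> y \<and> z \<noteq> x)"
    by (auto simp: lin_sym)
  then show ?thesis using False unfolding t_def by simp
qed simp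

lemma t_X: assumes "x \<in> X" "y \<in> X" shows "t x y \<in> X"
proof (cases "x = y")
  case False
  then show ?thesis using t_prop[OF assms False] lin_X[OF assms] by auto
qed (use assms in simp)

lemma t_in: assumes "x \<in> X" "y \<in> X" shows "t x y \<in> lin x y"
  using t_prop[OF assms] by (cases "x = y") auto

lemma t_uniq: assumes "x \<in> X" "y \<in> X" "z \<in> lin x y" "z \<noteq> x" "z \<noteq> y"
  shows "z = t x y"
proof -
  have "x \<noteq> y" using assms by auto
  then show ?thesis using t_prop[OF assms(1,2)] assms by auto
qed

lemma t_ne: assumes "x \<in> X" "y \<in> X" "x \<noteq> y" shows "t x y \<noteq> x" "t x y \<noteq> y"
  using t_prop[OF assms] by auto

lemma t_tt[simp]: assumes "x \<in> X" "y \<in> X" shows "t x (t x y) = y"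
proof (cases "x = y")
  case False
  have tp: "lin x y = {x, y, t x y}" "t x y \<noteq> x" "t x y \<noteq> y" using t_prop[OF assms False] by auto
  have "lin x (t x y) = lin x y" using lin_eq2[OF assms False, of x "t x y"] tp lin_in[OF assms] by auto
  moreover have "t x y \<in> X" using t_X assms by blast
  ultimately show ?thesis using t_uniq[of x "t x y" y] tp assms lin_in[OF assms] False by auto
qed simp

lemma t_tt2: assumes "x \<in> X" "y \<in> X" shows "t (t x y) x = y" "t y (t x y) = x" "t (t x y) y = x"
proof -
  show "t (t x y) x = y" using t_tt[OF assms] t_sym[of "t x y" x] by simp
  show "t y (t x y) = x" using t_tt[OF assms(2,1)] t_sym[of x y] by simp
  then show "t (t x y) y = x" using t_sym[of y "t x y"] by simp
qed

lemma t_swap: assumes "x \<in> X" "y \<in> X" "t x y = z" shows "t x z = y" "t z x = y" "t y z = x" "t z y = x"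
  using t_tt[OF assms(1,2)] t_tt2[OF assms(1,2)] assms(3) by auto

lemma t_inj: assumes "x \<in> X" "y \<in> X" "y' \<in> X" "t x y = t x y'" shows "y = y'"
  using t_tt[OF assms(1,2)] t_tt[OF assms(1,3)] assms(4) by metis

lemma lin_t: assumes "x \<in> X" "y \<in> X" "x \<noteq> y" shows "lin x (t x y) = lin x y"
  by (rule lin_eq2[OF assms]) (use lin_in[OF assms(1,2)] t_in[OF assms(1,2)] t_ne[OF assms] in auto)

lemma lin_explicit: assumes "x \<in> X" "y \<in> X" shows "lin x y = {x, y, t x y}"
proof (cases "x = y")
  case False
  then show ?thesis using t_prop[OF assms False] by blast
qed simp



lemma flat_X: "flat X Ls X"
  unfolding flat_def using lin_X by blast

lemma flat_lin: assumes "x \<in> X" "y \<in> X" shows "flat X Ls (lin x y)"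
proof (cases "x = y")
  case True
  then show ?thesis using assms unfolding flat_def by auto
next
  case False
  have "lineth Ls u v \<subseteq> lin x y" if "u \<in> lin x y" "v \<in> lin x y" for u v
  proof (cases "u = v")
    case False
    then show ?thesis using lin_eq2[OF assms \<open>x \<noteq> y\<close> that] by simp
  qed (use that in simp)
  then show ?thesis unfolding flat_def using lin_X[OF assms] by blast
qed

lemma flat_sub_X: "flat X Ls F \<Longrightarrow> F \<subseteq> X"
  unfolding flat_def by blast

lemma flat_lin_sub: assumes "flat X Ls F" "x \<in> F" "y \<in> F" shows "lin x y \<subseteq> F"
  using assms unfolding flat_def by blast

lemma flat_t: assumes "flat X Ls F" "x \<in> F" "y \<in> F" shows "t x y \<in> F"
proof -
  have "x \<in> X" "y \<in> X" using assms flat_sub_X by blast+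
  then have "t x y \<in> lin x y" by (rule t_in)
  then show ?thesis using flat_lin_sub[OF assms] by blast
qed

lemma fhull_least: assumes "flat X Ls F" "A \<subseteq> F" shows "fhull X Ls A \<subseteq> F"
  unfolding fhull_def using assms by blast

lemma fhull_sup: "A \<subseteq> fhull X Ls A"
  unfolding fhull_def by blast

lemma fhull_flat: assumes "A \<subseteq> X" shows "flat X Ls (fhull X Ls A)"
proof -
  have sub: "fhull X Ls A \<subseteq> X" using fhull_least[OF flat_X assms] .
  have "lineth Ls x y \<subseteq> fhull X Ls A" if "x \<in> fhull X Ls A" "y \<in> fhull X Ls A" for x y
  proof -
    have "lineth Ls x y \<subseteq> F" if "flat X Ls F" "A \<subseteq> F" for F
    proof -
      have "x \<in> F" "y \<in> F" using \<open>x \<in> fhull X Ls A\<close> \<open>y \<in> fhull X Ls A\<close> that unfolding fhull_def by blast+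
      then show ?thesis using flat_lin_sub[OF that(1)] by blast
    qed
    then show ?thesis unfolding fhull_def by blast
  qed
  then show ?thesis unfolding flat_def using sub by blast
qed

lemma fhull2: assumes "x \<in> X" "y \<in> X" shows "fhull X Ls {x, y} = lin x y"
proof
  show "fhull X Ls {x, y} \<subseteq> lin x y"
    by (rule fhull_least[OF flat_lin[OF assms]]) (use lin_in[OF assms] in blast)
  show "lin x y \<subseteq> fhull X Ls {x, y}"
    using flat_lin_sub[OF fhull_flat, of "{x,y}" x y] fhull_sup[of "{x,y}"] assms by blast
qed

lemma fhull1: assumes "x \<in> X" shows "fhull X Ls {x} = {x}"
  using fhull2[OF assms assms] by simp

lemma fhull0: "fhull X Ls {} = {}"
proof -
  have "flat X Ls {}" unfolding flat_def by simp
  then show ?thesis using fhull_least[of "{}" "{}"] by blast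
qed



definition H where "H a b p = fhull X Ls {a, b, p}"

definition nc where "nc a b p \<longleftrightarrow> a \<in> X \<and> b \<in> X \<and> p \<in> X \<and> a \<noteq> b \<and> p \<notin> lin a b"

lemma H_flat: "a \<in> X \<Longrightarrow> b \<in> X \<Longrightarrow> p \<in> X \<Longrightarrow> flat X Ls (H a b p)"
  unfolding H_def by (rule fhull_flat) simp

lemma H_in: "a \<in> H a b p" "b \<in> H a b p" "p \<in> H a b p"
  unfolding H_def using fhull_sup[of "{a, b, p}"] by simp_all

lemma H_X: "a \<in> X \<Longrightarrow> b \<in> X \<Longrightarrow> p \<in> X \<Longrightarrow> H a b p \<subseteq> X"
  by (rule flat_sub_X) (rule H_flat)

lemma H_perm: "H a b p = H b a p" "H a b p = H a p b" "H a b p = H p a b"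
  unfolding H_def by (simp_all add: insert_commute)

lemma H_least: "flat X Ls F \<Longrightarrow> a \<in> F \<Longrightarrow> b \<in> F \<Longrightarrow> p \<in> F \<Longrightarrow> H a b p \<subseteq> F"
  unfolding H_def by (rule fhull_least) auto

lemma lin_sub_H: assumes "a \<in> X" "b \<in> X" "p \<in> X" shows "lin a b \<subseteq> H a b p"
  by (rule flat_lin_sub[OF H_flat[OF assms]]) (rule H_in)+

lemma nc_X: "nc a b p \<Longrightarrow> a \<in> X \<and> b \<in> X \<and> p \<in> X"
  unfolding nc_def by blast

lemma nc_ne: assumes "nc a b p" shows "a \<noteq> b \<and> a \<noteq> p \<and> b \<noteq> p"
proof -
  have "a \<in> X" "b \<in> X" using assms unfolding nc_def by auto
  then have "a \<in> lin a b" "b \<in> lin a b" using lin_in by auto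
  then show ?thesis using assms unfolding nc_def by auto
qed

lemma nc_swap1: assumes "nc a b p" shows "nc b a p"
  using assms lin_sym unfolding nc_def by metis

lemma nc_swap2: assumes "nc a b p" shows "nc a p b"
proof -
  have X: "a \<in> X" "b \<in> X" "p \<in> X" and ne: "a \<noteq> b" "a \<noteq> p" "b \<noteq> p" using nc_X[OF assms] nc_ne[OF assms] by auto
  have "b \<notin> lin a p"
  proof
    assume "b \<in> lin a p"
    then have "lin a b = lin a p" using lin_eq2[OF X(1,3) ne(2), of a b] lin_in[OF X(1,3)] ne by blast
    then show False using assms lin_in[OF X(1,3)] unfolding nc_def by blast
  qed
  then show ?thesis using X ne unfolding nc_def by blast
qed

lemma nc_perm: assumes "nc a b p" shows "nc b a p" "nc a p b" "nc p a b" "nc b p a" "nc p b a"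
proof -
  show 1: "nc b a p" by (rule nc_swap1[OF assms])
  show 2: "nc a p b" by (rule nc_swap2[OF assms])
  show "nc p a b" by (rule nc_swap1[OF 2])
  show 3: "nc b p a" by (rule nc_swap2[OF 1])
  show "nc p b a" by (rule nc_swap1[OF 3])
qed

lemma lin_X': "x \<in> X \<Longrightarrow> y \<in> X \<Longrightarrow> z \<in> lin x y \<Longrightarrow> z \<in> X"
  using lin_X by blast

lemma reg_rule: assumes "A \<subseteq> X" "finite A" "card A < 3" "c \<in> fhull X Ls A" "q \<in> X - fhull X Ls A"
  shows "fhull X Ls (insert q A) = (\<Union>u\<in>lineth Ls c q. \<Union>a\<in>fhull X Ls A. lineth Ls u a)"
proof -
  have "\<forall>A c p. A \<subseteq> X \<and> finite A \<and> card A < 3 \<and> c \<in> fhull X Ls A \<and> p \<in> X - fhull X Ls A \<longrightarrow>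
        fhull X Ls (insert p A) = (\<Union>u\<in>lineth Ls c p. \<Union>a\<in>fhull X Ls A. lineth Ls u a)"
    using reg unfolding three_regular_def .
  then have "A \<subseteq> X \<and> finite A \<and> card A < 3 \<and> c \<in> fhull X Ls A \<and> q \<in> X - fhull X Ls A \<longrightarrow>
        fhull X Ls (insert q A) = (\<Union>u\<in>lineth Ls c q. \<Union>a\<in>fhull X Ls A. lineth Ls u a)"
    by (elim allE)
  then show ?thesis using assms by blast
qed

lemma H_explicit: assumes nc: "nc a b p"
  shows "H a b p = {a, b, t a b, p, t a p, t p b, t p (t a b), t (t a p) b, t (t a p) (t a b)}"
    (is "_ = ?S")
proof
  have X: "a \<in> X" "b \<in> X" "p \<in> X" and ne: "a \<noteq> b" using nc_X[OF nc] nc_ne[OF nc] by auto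
  define c where "c = t a b"
  define p' where "p' = t a p"
  have cX: "c \<in> X" "p' \<in> X" unfolding c_def p'_def using t_X X by auto
  have fl: "flat X Ls (H a b p)" by (rule H_flat[OF X])
  have ft: "\<And>x y. x \<in> H a b p \<Longrightarrow> y \<in> H a b p \<Longrightarrow> t x y \<in> H a b p" using flat_t[OF fl] .
  have i: "a \<in> H a b p" "b \<in> H a b p" "p \<in> H a b p" by (rule H_in)+
  have j: "t a b \<in> H a b p" "t a p \<in> H a b p" "t p b \<in> H a b p" using ft i by blast+
  have k: "t p (t a b) \<in> H a b p" "t (t a p) b \<in> H a b p" "t (t a p) (t a b) \<in> H a b p"
    using ft i j by blast+
  show "?S \<subseteq> H a b p" using i j k by simp
  have reg1: "fhull X Ls (insert p {a, b}) = (\<Union>u\<in>lineth Ls a p. \<Union>a'\<in>fhull X Ls {a, b}. lineth Ls u a')"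
  proof -
    have "{a, b} \<subseteq> X" "finite {a, b}" "card {a, b} < 3" using X by (auto simp: card_insert_if)
    moreover have "a \<in> fhull X Ls {a, b}" using fhull_sup by blast
    moreover have "p \<in> X - fhull X Ls {a, b}" using nc X fhull2[OF X(1,2)] unfolding nc_def by blast
    ultimately show ?thesis by (rule reg_rule)
  qed
  have "H a b p = fhull X Ls (insert p {a, b})" unfolding H_def by (simp add: insert_commute)
  also have "\<dots> = (\<Union>u\<in>{a, p, p'}. \<Union>a'\<in>{a, b, c}. lin u a')"
    unfolding reg1 fhull2[OF X(1,2)] lin_explicit[OF X(1,3)] lin_explicit[OF X(1,2)] c_def p'_def by simp
  also have "\<dots> \<subseteq> ?S"
  proof -
    let ?S' = "{a, b, c, p, p', t p b, t p c, t p' b, t p' c}"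
    have SS: "?S = ?S'" unfolding c_def p'_def by simp
    have e: "t a c = b" "t p a = p'" "t p' a = p" "t a a = a" "t a b = c" "t a p = p'"
      unfolding c_def p'_def using t_tt[OF X(1,2)] t_sym[of p a] t_tt2(1)[OF X(1,3)] by simp_all
    have "lin u a' \<subseteq> ?S'" if "u \<in> {a, p, p'}" "a' \<in> {a, b, c}" for u a'
    proof -
      have "u \<in> X" "a' \<in> X" using that X cX by auto
      then have "lin u a' = {u, a', t u a'}" by (rule lin_explicit)
      moreover have "t u a' \<in> ?S'" using that by (elim insertE emptyE) (simp_all add: e)
      ultimately show ?thesis using that by auto
    qed
    then show ?thesis unfolding SS by blast
  qed
  finally show "H a b p \<subseteq> ?S" .
qed

lemma H_finite: assumes "nc a b p" shows "finite (H a b p)" "card (H a b p) \<le> 9"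
proof -
  let ?xs = "[a, b, t a b, p, t a p, t p b, t p (t a b), t (t a p) b, t (t a p) (t a b)]"
  have "H a b p = set ?xs" using H_explicit[OF assms] by simp
  moreover have "card (set ?xs) \<le> length ?xs" by (rule card_length)
  ultimately show "finite (H a b p)" "card (H a b p) \<le> 9" by simp_all
qed


lemma H_eq_set: "{a, b, p} = {a', b', p'} \<Longrightarrow> H a b p = H a' b' p'"
  unfolding H_def by simp

lemma EX: assumes nc: "nc a b p" and q: "q \<in> H a b p" "q \<notin> lin a b"
  shows "H a b q = H a b p"
proof -
  have X: "a \<in> X" "b \<in> X" "p \<in> X" using nc_X[OF nc] by auto
  have qX: "q \<in> X" using H_X[OF X] q by blast
  have fq: "flat X Ls (H a b q)" by (rule H_flat[OF X(1,2) qX])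
  have ft: "\<And>x y. x \<in> H a b q \<Longrightarrow> y \<in> H a b q \<Longrightarrow> t x y \<in> H a b q" using flat_t[OF fq] .
  have i: "a \<in> H a b q" "b \<in> H a b q" "q \<in> H a b q" by (rule H_in)+
  have c: "t a b \<in> H a b q" using ft i by blast
  have cX: "t a b \<in> X" "t a p \<in> X" using t_X X by auto
  have inl: "a \<in> lin a b" "b \<in> lin a b" "t a b \<in> lin a b" using lin_in[OF X(1,2)] t_in[OF X(1,2)] by auto
  have "p \<in> H a b q"
  proof -
    have "q \<in> {p, t a p, t p b, t p (t a b), t (t a p) b, t (t a p) (t a b)}"
    proof -
      have "q \<in> {a, b, t a b, p, t a p, t p b, t p (t a b), t (t a p) b, t (t a p) (t a b)}"
        using q(1) unfolding H_explicit[OF nc] .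
      moreover have "q \<noteq> a" "q \<noteq> b" "q \<noteq> t a b" using q(2) inl by blast+
      ultimately show ?thesis by simp
    qed
    then show ?thesis
    proof (elim insertE emptyE)
      assume "q = p" then show ?thesis using i by simp
    next
      assume "q = t a p" then have "t a q = p" using t_swap(1)[OF X(1,3)] by blast
      then show ?thesis using ft[OF i(1) i(3)] by simp
    next
      assume "q = t p b" then have "t b q = p" using t_swap(3)[OF X(3,2)] by blast
      then show ?thesis using ft[OF i(2) i(3)] by simp
    next
      assume "q = t p (t a b)" then have "t (t a b) q = p" using t_swap(3)[OF X(3) cX(1)] by blast
      then show ?thesis using ft[OF c i(3)] by simp
    next
      assume "q = t (t a p) b" then have "t b q = t a p" using t_swap(3)[OF cX(2) X(2)] by blast
      then have "t a (t b q) = p" using t_tt[OF X(1,3)] by simp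
      then show ?thesis using ft[OF i(1) ft[OF i(2) i(3)]] by simp
    next
      assume "q = t (t a p) (t a b)" then have "t (t a b) q = t a p" using t_swap(3)[OF cX(2) cX(1)] by blast
      then have "t a (t (t a b) q) = p" using t_tt[OF X(1,3)] by simp
      then show ?thesis using ft[OF i(1) ft[OF c i(3)]] by simp
    qed
  qed
  then have "H a b p \<subseteq> H a b q" by (rule H_least[OF fq i(1,2)])
  moreover have "H a b q \<subseteq> H a b p" using H_least[OF H_flat[OF X] H_in(1,2) q(1)] .
  ultimately show ?thesis by blast
qed

lemma lin_two: assumes "x \<in> X" "y \<in> X" "x \<noteq> y" "u \<in> X" "v \<in> X" "x \<in> lin u v" "y \<in> lin u v" "u \<noteq> v"
  shows "lin u v = lin x y"
  using lin_eq2[OF assms(4,5,8,6,7,3)] by simp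

lemma EXa: assumes nc: "nc u v w" and a: "a \<in> H u v w"
  shows "\<exists>v' w'. nc a v' w' \<and> H u v w = H a v' w'"
proof -
  have X: "u \<in> X" "v \<in> X" "w \<in> X" using nc_X[OF nc] by auto
  have aX: "a \<in> X" using H_X[OF X] a by blast
  have ne: "u \<noteq> v" "u \<noteq> w" "v \<noteq> w" using nc_ne[OF nc] by auto
  show ?thesis
  proof (cases "a \<in> lin v w")
    case False
    have nc1: "nc v w u" using nc_perm[OF nc] by blast
    have H1: "H u v w = H v w u" by (rule H_eq_set) auto
    have "H v w a = H v w u" using EX[OF nc1 _ False] a H1 by simp
    moreover have "nc v w a" using X aX ne False unfolding nc_def by blast
    moreover have "H a v w = H v w a" by (rule H_eq_set) auto
    ultimately show ?thesis using H1 nc_perm(3)[of v w a] by metis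
  next
    case True
    show ?thesis
    proof (cases "a \<in> lin u w")
      case False
      have nc1: "nc u w v" using nc_perm[OF nc] by blast
      have H1: "H u v w = H u w v" by (rule H_eq_set) auto
      have "H u w a = H u w v" using EX[OF nc1 _ False] a H1 by simp
      moreover have "nc u w a" using X aX ne False unfolding nc_def by blast
      moreover have "H a u w = H u w a" by (rule H_eq_set) auto
      ultimately show ?thesis using H1 nc_perm(3)[of u w a] by metis
    next
      case True2: True
      have "a = w"
      proof (rule ccontr)
        assume "a \<noteq> w"
        have "lin v w = lin a w" using lin_two[OF aX X(3) \<open>a \<noteq> w\<close> X(2,3) True _ ne(3)] lin_in[OF X(2,3)] by blast
        moreover have "lin u w = lin a w" using lin_two[OF aX X(3) \<open>a \<noteq> w\<close> X(1,3) True2 _ ne(2)] lin_in[OF X(1,3)] by blast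
        ultimately have "u \<in> lin v w" using lin_in[OF X(1,3)] by simp
        then show False using nc_perm(4)[OF nc] unfolding nc_def by blast
      qed
      moreover have "H u v w = H w u v" by (rule H_eq_set) auto
      ultimately show ?thesis using nc_perm(3)[OF nc] by metis
    qed
  qed
qed

lemma EXb: assumes nc: "nc a v w" and b: "b \<in> H a v w" "b \<noteq> a"
  shows "\<exists>w'. nc a b w' \<and> H a v w = H a b w'"
proof -
  have X: "a \<in> X" "v \<in> X" "w \<in> X" using nc_X[OF nc] by auto
  have bX: "b \<in> X" using H_X[OF X] b by blast
  have ne: "a \<noteq> v" "a \<noteq> w" "v \<noteq> w" using nc_ne[OF nc] by auto
  show ?thesis
  proof (cases "b \<in> lin a v")
    case False
    have "H a v b = H a v w" using EX[OF nc b(1) False] .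
    moreover have "nc a v b" using X bX ne False unfolding nc_def by blast
    moreover have "H a b v = H a v b" by (rule H_eq_set) auto
    ultimately show ?thesis using nc_perm(2)[of a v b] by metis
  next
    case True
    have F: "b \<notin> lin a w"
    proof
      assume "b \<in> lin a w"
      have "lin a v = lin a b" using lin_two[OF X(1) bX b(2)[symmetric] X(1,2) _ True ne(1)] lin_in[OF X(1,2)] by blast
      moreover have "lin a w = lin a b" using lin_two[OF X(1) bX b(2)[symmetric] X(1,3) _ \<open>b \<in> lin a w\<close> ne(2)] lin_in[OF X(1,3)] by blast
      ultimately have "w \<in> lin a v" using lin_in[OF X(1,3)] by simp
      then show False using nc unfolding nc_def by blast
    qed
    have nc1: "nc a w v" using nc_perm[OF nc] by blast
    have H1: "H a v w = H a w v" by (rule H_eq_set) auto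
    have "H a w b = H a w v" using EX[OF nc1 _ F] b H1 by simp
    moreover have "nc a w b" using X bX ne F unfolding nc_def by blast
    moreover have "H a b w = H a w b" by (rule H_eq_set) auto
    ultimately show ?thesis using H1 nc_perm(2)[of a w b] by metis
  qed
qed

lemma PE: assumes nc: "nc u v w" and "a \<in> H u v w" "b \<in> H u v w" "p \<in> H u v w" and nc2: "nc a b p"
  shows "H a b p = H u v w"
proof -
  obtain v' w' where 1: "nc a v' w'" "H u v w = H a v' w'" using EXa[OF nc assms(2)] by blast
  have "b \<noteq> a" using nc_ne[OF nc2] by auto
  then obtain w'' where 2: "nc a b w''" "H a v' w' = H a b w''" using EXb[OF 1(1)] assms(3) 1(2) by metis
  have "p \<notin> lin a b" using nc2 unfolding nc_def by blast
  then have "H a b p = H a b w''" using EX[OF 2(1)] assms(4) 1(2) 2(2) by simp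
  then show ?thesis using 1 2 by simp
qed


lemma plane_H: assumes "plane X Ls P" shows "\<exists>a b p. nc a b p \<and> P = H a b p"
proof -
  have fl: "flat X Ls P" and hr: "has_rank X Ls P 3" using assms unfolding plane_def by auto
  obtain B where B: "B \<subseteq> X" "finite B" "card B = 3" "P \<subseteq> fhull X Ls B" using hr unfolding has_rank_def by blast
  have mn: "\<And>B'. B' \<subseteq> X \<Longrightarrow> finite B' \<Longrightarrow> P \<subseteq> fhull X Ls B' \<Longrightarrow> 3 \<le> card B'"
    using hr unfolding has_rank_def by blast
  have PX: "P \<subseteq> X" using fl by (rule flat_sub_X)
  obtain b1 b2 b3 where b: "B = {b1, b2, b3}" "b1 \<noteq> b2" "b2 \<noteq> b3" "b1 \<noteq> b3"
    using B(3) unfolding card_3_iff by blast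
  have bX: "b1 \<in> X" "b2 \<in> X" "b3 \<in> X" using B(1) b(1) by auto
  have nc: "nc b1 b2 b3"
  proof (rule ccontr)
    assume "\<not> nc b1 b2 b3"
    then have "b3 \<in> lin b1 b2" using bX b unfolding nc_def by blast
    then have "B \<subseteq> lin b1 b2" using lin_in[OF bX(1,2)] b(1) by blast
    then have "fhull X Ls B \<subseteq> lin b1 b2" by (rule fhull_least[OF flat_lin[OF bX(1,2)]])
    then have "P \<subseteq> fhull X Ls {b1, b2}" using B(4) fhull2[OF bX(1,2)] by blast
    then have "3 \<le> card {b1, b2}" using mn[of "{b1, b2}"] bX by blast
    then show False using b(2) by simp
  qed
  have PH: "P \<subseteq> H b1 b2 b3" using B(4) b unfolding H_def by simp
  obtain a where a: "a \<in> P"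
  proof (cases "P = {}")
    case True
    then have "3 \<le> card ({} :: 'a set)" using mn[of "{}"] by simp
    then show ?thesis by simp
  qed blast
  have aX: "a \<in> X" using a PX by blast
  obtain b where bb: "b \<in> P" "b \<noteq> a"
  proof (cases "P \<subseteq> {a}")
    case True
    then have "P \<subseteq> fhull X Ls {a}" using fhull1[OF aX] by simp
    then have "3 \<le> card {a}" using mn[of "{a}"] aX by blast
    then show ?thesis by simp
  qed blast
  have bX': "b \<in> X" using bb PX by blast
  obtain p where pp: "p \<in> P" "p \<notin> lin a b"
  proof (cases "P \<subseteq> lin a b")
    case True
    then have "P \<subseteq> fhull X Ls {a, b}" using fhull2[OF aX bX'] by simp
    then have "3 \<le> card {a, b}" using mn[of "{a, b}"] aX bX' by blast
    then show ?thesis using bb(2) by (simp add: card_insert_if)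
  qed blast
  have nc2: "nc a b p" using aX bX' pp PX bb(2) unfolding nc_def by blast
  have "H a b p \<subseteq> P" by (rule H_least[OF fl a bb(1) pp(1)])
  moreover have "H a b p = H b1 b2 b3" using PE[OF nc _ _ _ nc2] a bb(1) pp(1) PH by blast
  ultimately have "P = H a b p" using PH by blast
  then show ?thesis using nc2 by blast
qed

definition isP where "isP P \<longleftrightarrow> (\<exists>a b p. nc a b p \<and> P = H a b p)"

definition par where "par P l z = {\<Lambda>\<in>Ls. z \<in> \<Lambda> \<and> \<Lambda> \<subseteq> P - l}"

lemma isP_basic: assumes "isP P" shows "flat X Ls P" "finite P" "card P \<le> 9" "P \<subseteq> X"
proof -
  obtain a b p where nc: "nc a b p" and P: "P = H a b p" using assms unfolding isP_def by blast
  have X: "a \<in> X" "b \<in> X" "p \<in> X" using nc_X[OF nc] by auto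
  show "flat X Ls P" unfolding P by (rule H_flat[OF X])
  show "finite P" "card P \<le> 9" unfolding P using H_finite[OF nc] by auto
  show "P \<subseteq> X" unfolding P by (rule H_X[OF X])
qed

lemma line_3: "l \<in> Ls \<Longrightarrow> finite l" "l \<in> Ls \<Longrightarrow> card l = 3"
  using line_card by auto

lemma lin_meet: assumes "l \<in> Ls" "a \<in> l" "z \<in> X" "z \<notin> l" "q \<in> lin z a" "q \<in> l"
  shows "q = a"
proof (rule ccontr)
  assume ne: "q \<noteq> a"
  have aX: "a \<in> X" "q \<in> X" using assms line_sub by auto
  have za: "z \<noteq> a" using assms by blast
  have "lin q a = l" using lin_uniq[OF assms(1,6,2) ne] .
  moreover have "lin z a = lin q a" using lin_two[OF aX(2) aX(1) ne assms(3) aX(1) assms(5) _ za] lin_in[OF assms(3) aX(1)] by blast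
  ultimately show False using lin_in[OF assms(3) aX(1)] assms(4) by blast
qed

lemma G: assumes "l \<in> Ls" "a \<in> l" "z \<in> X" "z \<notin> l" shows "t z a \<notin> l" "t z a \<noteq> z"
proof -
  have aX: "a \<in> X" using assms line_sub by auto
  have za: "z \<noteq> a" using assms by blast
  show "t z a \<notin> l"
  proof
    assume "t z a \<in> l"
    then have "t z a = a" using lin_meet[OF assms] t_in[OF assms(3) aX] by blast
    then show False using t_ne[OF assms(3) aX za] by simp
  qed
  show "t z a \<noteq> z" using t_ne[OF assms(3) aX za] by simp
qed

lemma CNT: assumes P: "isP P" and l: "l \<in> Ls" "l \<subseteq> P" and z: "z \<in> P" "z \<notin> l"
  shows "finite (par P l z)" "card P = 7 + 2 * card (par P l z)"
proof -
  have fl: "flat X Ls P" and fP: "finite P" and PX: "P \<subseteq> X" using isP_basic[OF P] by auto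
  have zX: "z \<in> X" using z PX by blast
  define A where "A = {\<Lambda>\<in>Ls. z \<in> \<Lambda> \<and> \<Lambda> \<subseteq> P}"
  have fA: "finite A" using finite_Pow_iff[of P] fP unfolding A_def
    by (metis (no_types, lifting) PowI finite_subset mem_Collect_eq subsetI)
  have c1: "P - {z} = (\<Union>\<Lambda>\<in>A. \<Lambda> - {z})"
  proof
    show "P - {z} \<subseteq> (\<Union>\<Lambda>\<in>A. \<Lambda> - {z})"
    proof
      fix q assume q: "q \<in> P - {z}"
      have qX: "q \<in> X" using q PX by blast
      have "lin z q \<in> A" unfolding A_def using lin_prop[OF zX qX] q flat_lin_sub[OF fl z(1)] by blast
      moreover have "q \<in> lin z q - {z}" using lin_in[OF zX qX] q by blast
      ultimately show "q \<in> (\<Union>\<Lambda>\<in>A. \<Lambda> - {z})" by blast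
    qed
    show "(\<Union>\<Lambda>\<in>A. \<Lambda> - {z}) \<subseteq> P - {z}" unfolding A_def by blast
  qed
  have c2: "card (\<Lambda> - {z}) = 2" if "\<Lambda> \<in> A" for \<Lambda>
    using that line_3[of \<Lambda>] unfolding A_def by (simp add: card_Diff_singleton)
  have c3: "(\<Lambda>1 - {z}) \<inter> (\<Lambda>2 - {z}) = {}" if "\<Lambda>1 \<in> A" "\<Lambda>2 \<in> A" "\<Lambda>1 \<noteq> \<Lambda>2" for \<Lambda>1 \<Lambda>2
  proof (rule ccontr)
    assume "(\<Lambda>1 - {z}) \<inter> (\<Lambda>2 - {z}) \<noteq> {}"
    then obtain q where q: "q \<in> \<Lambda>1" "q \<in> \<Lambda>2" "q \<noteq> z" by blast
    have "lin z q = \<Lambda>1" "lin z q = \<Lambda>2" using lin_uniq[of _ z q] that q unfolding A_def by auto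
    then show False using that by simp
  qed
  have "card (\<Union>\<Lambda>\<in>A. \<Lambda> - {z}) = (\<Sum>\<Lambda>\<in>A. card (\<Lambda> - {z}))"
    by (rule card_UN_disjoint[OF fA]) (use c3 line_3 in \<open>auto simp: A_def\<close>)
  also have "\<dots> = 2 * card A" using c2 by simp
  finally have u: "card (\<Union>\<Lambda>\<in>A. \<Lambda> - {z}) = 2 * card A" .
  have "card (P - {z}) = 2 * card A" unfolding c1 by (rule u)
  then have cA: "card P - 1 = 2 * card A" using fP z(1) by (simp add: card_Diff_singleton)
  define B where "B = {\<Lambda>\<in>A. \<Lambda> \<inter> l \<noteq> {}}"
  have B: "B = (\<lambda>q. lin z q) ` l"
  proof
    show "B \<subseteq> (\<lambda>q. lin z q) ` l"
    proof
      fix \<Lambda> assume "\<Lambda> \<in> B"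
      then obtain q where q: "q \<in> \<Lambda>" "q \<in> l" "\<Lambda> \<in> Ls" "z \<in> \<Lambda>" unfolding B_def A_def by blast
      have "q \<noteq> z" using q z by blast
      then have "lin z q = \<Lambda>" using lin_uniq[OF q(3) q(4) q(1)] by simp
      then show "\<Lambda> \<in> (\<lambda>q. lin z q) ` l" using q by blast
    qed
    show "(\<lambda>q. lin z q) ` l \<subseteq> B"
    proof
      fix \<Lambda> assume "\<Lambda> \<in> (\<lambda>q. lin z q) ` l"
      then obtain q where q: "q \<in> l" "\<Lambda> = lin z q" by blast
      have qX: "q \<in> X" "q \<in> P" using q l PX by auto
      have "q \<noteq> z" using q z by blast
      then have "lin z q \<in> Ls" "z \<in> lin z q" "q \<in> lin z q" using lin_prop[OF zX qX(1)] by auto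
      moreover have "lin z q \<subseteq> P" using flat_lin_sub[OF fl z(1) qX(2)] .
      ultimately show "\<Lambda> \<in> B" unfolding B_def A_def using q by blast
    qed
  qed
  have inj: "inj_on (\<lambda>q. lin z q) l"
  proof
    fix q q' assume q: "q \<in> l" "q' \<in> l" "lin z q = lin z q'"
    show "q = q'"
    proof (rule ccontr)
      assume ne: "q \<noteq> q'"
      have qX: "q \<in> X" "q' \<in> X" using q l(1) line_sub by auto
      have "q' \<in> lin z q" using q(3) lin_in[OF zX qX(2)] by simp
      then show False using lin_meet[OF l(1) q(1) zX z(2) _ q(2)] ne by simp
    qed
  qed
  have cB: "card B = 3" unfolding B using card_image[OF inj] line_3[OF l(1)] by simp
  have parA: "par P l z = {\<Lambda>\<in>A. \<Lambda> \<inter> l = {}}" unfolding par_def A_def by blast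
  have "A = B \<union> par P l z" unfolding parA B_def by blast
  moreover have "B \<inter> par P l z = {}" unfolding parA B_def by blast
  moreover have "finite B" "finite (par P l z)" using fA unfolding parA B_def by auto
  ultimately have "card A = card B + card (par P l z)" by (simp add: card_Un_disjoint)
  then show "card P = 7 + 2 * card (par P l z)" using cA cB by simp
  show "finite (par P l z)" using fA unfolding parA by simp
qed


lemma isP_H: "nc a b p \<Longrightarrow> isP (H a b p)"
  unfolding isP_def by blast

lemma PC: assumes "isP P" shows "card P = 7 \<or> card P = 9"
proof -
  obtain a b p where nc: "nc a b p" and P: "P = H a b p" using assms unfolding isP_def by blast
  have X: "a \<in> X" "b \<in> X" "p \<in> X" using nc_X[OF nc] by auto
  have l: "lin a b \<in> Ls" using lin_prop[OF X(1,2)] nc_ne[OF nc] by blast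
  have "lin a b \<subseteq> P" unfolding P by (rule lin_sub_H[OF X])
  moreover have "p \<in> P" "p \<notin> lin a b" using nc H_in unfolding P nc_def by auto
  ultimately have "card P = 7 + 2 * card (par P (lin a b) p)" using CNT[OF assms l] by blast
  moreover have "card P \<le> 9" using isP_basic[OF assms] by blast
  ultimately show ?thesis by presburger
qed

lemma par7: assumes "isP P" "card P = 7" "l \<in> Ls" "l \<subseteq> P" "z \<in> P" "z \<notin> l"
  shows "par P l z = {}"
  using CNT[OF assms(1,3-6)] assms(2) by simp

lemma par9: assumes "isP P" "card P = 9" "l \<in> Ls" "l \<subseteq> P" "z \<in> P" "z \<notin> l"
  shows "\<exists>\<Lambda>. par P l z = {\<Lambda>}"
proof -
  have "card (par P l z) = 1" using CNT[OF assms(1,3-6)] assms(2) by simp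
  then show ?thesis by (rule card_1_singletonE) blast
qed

lemma F1: assumes P: "isP P" "card P = 7" and l: "l \<in> Ls" "l \<subseteq> P" and ab: "a \<in> l" "b \<in> l" "a \<noteq> b"
  and z: "z \<in> P" "z \<notin> l"
  shows "t (t z a) (t z b) = t a b"
proof -
  have fl: "flat X Ls P" and PX: "P \<subseteq> X" using isP_basic[OF P(1)] by auto
  have zX: "z \<in> X" using z PX by blast
  have X: "a \<in> X" "b \<in> X" using ab l line_sub by auto
  define \<beta> where "\<beta> = t z a"
  define \<gamma> where "\<gamma> = t z b"
  have bX: "\<beta> \<in> X" "\<gamma> \<in> X" unfolding \<beta>_def \<gamma>_def using t_X zX X by auto
  have bg: "\<beta> \<noteq> \<gamma>" unfolding \<beta>_def \<gamma>_def using t_inj[OF zX X] ab(3) by blast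
  have bP: "\<beta> \<in> P" "\<gamma> \<in> P" unfolding \<beta>_def \<gamma>_def using flat_t[OF fl] z ab l by blast+
  have bl: "\<beta> \<notin> l" "\<gamma> \<notin> l" unfolding \<beta>_def \<gamma>_def using G[OF l(1) _ zX z(2)] ab by blast+
  have m: "lin \<beta> \<gamma> \<in> Ls" "\<beta> \<in> lin \<beta> \<gamma>" "\<gamma> \<in> lin \<beta> \<gamma>" using lin_prop[OF bX bg] by auto
  have mP: "lin \<beta> \<gamma> \<subseteq> P" by (rule flat_lin_sub[OF fl bP])
  have "par P l \<beta> = {}" by (rule par7[OF P l bP(1) bl(1)])
  then have "\<not> lin \<beta> \<gamma> \<subseteq> P - l" using m unfolding par_def by blast
  then obtain q where q: "q \<in> lin \<beta> \<gamma>" "q \<in> l" using mP by blast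
  have qX: "q \<in> X" using q l line_sub by blast
  have key: "False" if "u \<in> l" "v \<in> l" "u \<noteq> v" "u \<in> lin (t z u) (t z v)" for u v
  proof -
    have uX: "u \<in> X" "v \<in> X" using that l line_sub by auto
    have zu: "z \<noteq> u" "z \<noteq> v" using that z by blast+
    have tu: "t z u \<in> X" "t z v \<in> X" using t_X zX uX by auto
    have ne: "t z u \<noteq> t z v" using t_inj[OF zX uX] that(3) by blast
    have ne2: "u \<noteq> t z u" using t_ne[OF zX uX(1) zu(1)] by simp
    have "lin (t z u) (t z v) = lin u (t z u)"
      using lin_two[OF uX(1) tu(1) ne2 tu(1) tu(2) that(4) _ ne] lin_in[OF tu] by blast
    moreover have "lin z u = lin u (t z u)"
      using lin_two[OF uX(1) tu(1) ne2 zX uX(1) _ t_in[OF zX uX(1)] zu(1)] lin_in[OF zX uX(1)] by blast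
    ultimately have "t z v \<in> lin z u" using lin_in[OF tu] by simp
    moreover have "t z v \<noteq> z" using G(2)[OF l(1) that(2) zX z(2)] .
    ultimately have "lin z (t z v) = lin z u" using lin_eq2[OF zX uX(1) zu(1)] lin_in[OF zX uX(1)] by metis
    moreover have "lin z (t z v) = lin z v" using lin_t[OF zX uX(2) zu(2)] .
    ultimately have "v \<in> lin z u" using lin_in[OF zX uX(2)] by simp
    then have "v = u" using lin_meet[OF l(1) that(1) zX z(2) _ that(2)] by simp
    then show False using that(3) by simp
  qed
  have qa: "q \<noteq> a" using key[OF ab] q unfolding \<beta>_def \<gamma>_def by blast
  have qb: "q \<noteq> b"
  proof
    assume "q = b"
    then have "b \<in> lin (t z b) (t z a)" using q(1) lin_sym unfolding \<beta>_def \<gamma>_def by metis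
    then show False using key[OF ab(2,1) ab(3)[symmetric]] by blast
  qed
  have "lin a b = l" using lin_uniq[OF l(1) ab] .
  then have "q = t a b" using t_uniq[OF X, of q] q qa qb by blast
  moreover have "q = t \<beta> \<gamma>" using t_uniq[OF bX q(1)] q(2) bl by blast
  ultimately show ?thesis unfolding \<beta>_def \<gamma>_def by simp
qed


lemma A1: assumes P: "isP P" "card P = 9" and l: "l \<in> Ls" "l \<subseteq> P" and ab: "a \<in> l" "b \<in> l" "a \<noteq> b"
  and z: "z \<in> P" "z \<notin> l"
  shows "t (t z a) (t z b) = t z (t a b)"
proof -
  have fl: "flat X Ls P" and PX: "P \<subseteq> X" and fP: "finite P" using isP_basic[OF P(1)] by auto
  have zX: "z \<in> X" using z PX by blast
  have X: "a \<in> X" "b \<in> X" using ab l line_sub by auto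
  define c where "c = t a b"
  have lab: "lin a b = l" using lin_uniq[OF l(1) ab] .
  have lc: "l = {a, b, c}" "c \<noteq> a" "c \<noteq> b" using t_prop[OF X ab(3)] lab unfolding c_def by auto
  have cl: "c \<in> l" using lc by blast
  have cX: "c \<in> X" using cl l line_sub by blast
  define \<alpha> where "\<alpha> = t z c"
  define \<beta> where "\<beta> = t z a"
  define \<gamma> where "\<gamma> = t z b"
  have gX: "\<alpha> \<in> X" "\<beta> \<in> X" "\<gamma> \<in> X" unfolding \<alpha>_def \<beta>_def \<gamma>_def using t_X zX X cX by auto
  have dis: "\<alpha> \<noteq> \<beta>" "\<alpha> \<noteq> \<gamma>" "\<beta> \<noteq> \<gamma>" unfolding \<alpha>_def \<beta>_def \<gamma>_def
    using t_inj[OF zX] X cX ab(3) lc(2,3) by metis+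
  have gP: "\<alpha> \<in> P" "\<beta> \<in> P" "\<gamma> \<in> P" unfolding \<alpha>_def \<beta>_def \<gamma>_def using flat_t[OF fl] z ab cl l by blast+
  have gl: "\<alpha> \<notin> l" "\<beta> \<notin> l" "\<gamma> \<notin> l" unfolding \<alpha>_def \<beta>_def \<gamma>_def using G[OF l(1) _ zX z(2)] ab cl by blast+
  obtain \<Lambda>z where Lz: "par P l z = {\<Lambda>z}" using par9[OF P l z] by blast
  have Lz': "\<Lambda>z \<in> Ls" "z \<in> \<Lambda>z" "\<Lambda>z \<subseteq> P - l" using Lz unfolding par_def by blast+
  obtain \<Lambda>b where Lb: "par P l \<beta> = {\<Lambda>b}" using par9[OF P l gP(2) gl(2)] by blast
  have Lb': "\<Lambda>b \<in> Ls" "\<beta> \<in> \<Lambda>b" "\<Lambda>b \<subseteq> P - l" using Lb unfolding par_def by blast+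
  have notz: "t z u \<notin> \<Lambda>z" if "u \<in> l" for u
  proof
    assume h: "t z u \<in> \<Lambda>z"
    have uX: "u \<in> X" using that l line_sub by blast
    have zu: "z \<noteq> u" using that z by blast
    have ne: "z \<noteq> t z u" using G(2)[OF l(1) that zX z(2)] by simp
    have "lin z (t z u) = \<Lambda>z" using lin_uniq[OF Lz'(1) Lz'(2) h ne] .
    then have "u \<in> \<Lambda>z" using lin_t[OF zX uX zu] lin_in[OF zX uX] by simp
    then show False using Lz'(3) that by blast
  qed
  have gLz: "\<alpha> \<notin> \<Lambda>z" "\<beta> \<notin> \<Lambda>z" "\<gamma> \<notin> \<Lambda>z" unfolding \<alpha>_def \<beta>_def \<gamma>_def using notz ab cl by blast+
  define U where "U = l \<union> \<Lambda>z \<union> {\<alpha>, \<beta>, \<gamma>}"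
  have UP: "U \<subseteq> P" unfolding U_def using l(2) Lz'(3) gP by blast
  have cU: "card U = 9"
  proof -
    have f: "finite l" "finite \<Lambda>z" using line_3 l(1) Lz'(1) by auto
    have "card (l \<union> \<Lambda>z) = 6" using card_Un_disjoint[OF f] line_3 l(1) Lz'(1) Lz'(3) by auto
    moreover have "card {\<alpha>, \<beta>, \<gamma>} = 3" using dis by simp
    moreover have "(l \<union> \<Lambda>z) \<inter> {\<alpha>, \<beta>, \<gamma>} = {}" using gl gLz by blast
    ultimately show ?thesis unfolding U_def using card_Un_disjoint[of "l \<union> \<Lambda>z" "{\<alpha>, \<beta>, \<gamma>}"] f by simp
  qed
  have UeP: "U = P" using card_subset_eq[OF fP UP] cU P(2) by simp
  have disj: "\<Lambda>b \<inter> \<Lambda>z = {}"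
  proof (rule ccontr)
    assume "\<Lambda>b \<inter> \<Lambda>z \<noteq> {}"
    then obtain w where w: "w \<in> \<Lambda>b" "w \<in> \<Lambda>z" by blast
    have wP: "w \<in> P" "w \<notin> l" using w Lz'(3) by blast+
    obtain \<Lambda> where "par P l w = {\<Lambda>}" using par9[OF P l wP] by blast
    moreover have "\<Lambda>b \<in> par P l w" "\<Lambda>z \<in> par P l w" unfolding par_def using Lb' Lz' w by blast+
    ultimately have "\<Lambda>b = \<Lambda>z" by blast
    then show False using Lb'(2) gLz(2) by blast
  qed
  have "\<Lambda>b \<subseteq> {\<alpha>, \<beta>, \<gamma>}" using Lb'(3) disj UeP unfolding U_def by blast
  then have Lbe: "\<Lambda>b = {\<alpha>, \<beta>, \<gamma>}" using card_subset_eq[of "{\<alpha>, \<beta>, \<gamma>}" \<Lambda>b] line_3[OF Lb'(1)] dis by simp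
  have "lin \<beta> \<gamma> = \<Lambda>b" using lin_uniq[OF Lb'(1)] Lbe dis(3) by simp
  then have "\<alpha> = t \<beta> \<gamma>" using t_uniq[OF gX(2,3), of \<alpha>] Lbe dis by simp
  then show ?thesis unfolding \<alpha>_def \<beta>_def \<gamma>_def c_def by simp
qed


lemma t_inj2: assumes "x \<in> X" "y \<in> X" "y' \<in> X" "y \<noteq> y'" shows "t y x \<noteq> t y' x"
  using t_inj[OF assms(1-3)] assms(4) t_sym[of y x] t_sym[of y' x] by auto

lemma U: assumes nx: "nc a b x" and ny: "nc a b y" and c7: "card (H a b x) = 7" and c9: "card (H a b y) = 9"
  shows False
proof -
  define P where "P = H a b x"
  define Q where "Q = H a b y"
  have iP: "isP P" "isP Q" unfolding P_def Q_def using isP_H nx ny by auto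
  have flP: "flat X Ls P" and flQ: "flat X Ls Q" and PX: "P \<subseteq> X" and QX: "Q \<subseteq> X"
    using isP_basic iP by auto
  have X: "a \<in> X" "b \<in> X" "x \<in> X" "y \<in> X" using nc_X nx ny by auto
  have ab: "a \<noteq> b" using nc_ne[OF nx] by simp
  define L where "L = lin a b"
  define c where "c = t a b"
  have L: "L \<in> Ls" "a \<in> L" "b \<in> L" using lin_prop[OF X(1,2) ab] unfolding L_def by auto
  have Lc: "L = {a, b, c}" "c \<noteq> a" "c \<noteq> b" using t_prop[OF X(1,2) ab] unfolding L_def c_def by auto
  have cX: "c \<in> X" using Lc L line_sub by blast
  have LP: "L \<subseteq> P" "L \<subseteq> Q" unfolding L_def P_def Q_def using lin_sub_H X by auto
  have xP: "x \<in> P" "x \<notin> L" and yQ: "y \<in> Q" "y \<notin> L"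
    using H_in nx ny unfolding P_def Q_def L_def nc_def by auto
  have PQ: False if "q \<in> P" "q \<in> Q" "q \<notin> L" for q
  proof -
    have "H a b q = P" using EX[OF nx] that unfolding P_def L_def by blast
    moreover have "H a b q = Q" using EX[OF ny] that unfolding Q_def L_def by blast
    ultimately show False using c7 c9 unfolding P_def Q_def by simp
  qed
  have xQ: "x \<notin> Q" using PQ xP by blast
  have yP: "y \<notin> P" using PQ yQ by blast
  have LX: "\<And>i. i \<in> L \<Longrightarrow> i \<in> X" using L(1) line_sub by blast
  have xL: "t i x \<notin> L" if "i \<in> L" for i using G(1)[OF L(1) that X(3) xP(2)] t_sym[of i x] by simp
  have yL: "t i y \<notin> L" if "i \<in> L" for i using G(1)[OF L(1) that X(4) yQ(2)] t_sym[of i y] by simp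
  have xiP: "\<And>i. i \<in> L \<Longrightarrow> t i x \<in> P" using flat_t[OF flP] LP xP by blast
  have yiQ: "\<And>i. i \<in> L \<Longrightarrow> t i y \<in> Q" using flat_t[OF flQ] LP yQ by blast
  have xiX: "\<And>i. i \<in> L \<Longrightarrow> t i x \<in> X" and yiX: "\<And>i. i \<in> L \<Longrightarrow> t i y \<in> X"
    using t_X LX X by auto
  have Px: "\<And>i j. i \<in> L \<Longrightarrow> j \<in> L \<Longrightarrow> i \<noteq> j \<Longrightarrow> t (t i x) (t j x) = t i j"
  proof -
    fix i j assume h: "i \<in> L" "j \<in> L" "i \<noteq> j"
    have "t (t x i) (t x j) = t i j" using F1[OF iP(1) c7[folded P_def] L(1) LP(1) h xP] .
    then show "t (t i x) (t j x) = t i j" using t_sym[of x i] t_sym[of x j] by simp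
  qed
  have Qy: "\<And>i j. i \<in> L \<Longrightarrow> j \<in> L \<Longrightarrow> i \<noteq> j \<Longrightarrow> t (t i y) (t j y) = t y (t i j)"
  proof -
    fix i j assume h: "i \<in> L" "j \<in> L" "i \<noteq> j"
    have "t (t y i) (t y j) = t y (t i j)" using A1[OF iP(2) c9[folded Q_def] L(1) LP(2) h yQ] .
    then show "t (t i y) (t j y) = t y (t i j)" using t_sym[of y i] t_sym[of y j] by simp
  qed
  have third: "\<And>i j k. i \<in> L \<Longrightarrow> j \<in> L \<Longrightarrow> k \<in> L \<Longrightarrow> i \<noteq> j \<Longrightarrow> i \<noteq> k \<Longrightarrow> j \<noteq> k \<Longrightarrow> t j k = i"
  proof -
    fix i j k assume h: "i \<in> L" "j \<in> L" "k \<in> L" "i \<noteq> j" "i \<noteq> k" "j \<noteq> k"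
    have "lin j k = L" using lin_uniq[OF L(1) h(2,3,6)] .
    then show "t j k = i" using t_uniq[OF LX[OF h(2)] LX[OF h(3)], of i] h by simp
  qed
  define z where "z = t x y"
  have zX: "z \<in> X" unfolding z_def using t_X X by auto
  have xy: "x \<noteq> y" using xP yP by blast
  have zP: "z \<notin> P"
  proof
    assume "z \<in> P" then have "t x z \<in> P" using flat_t[OF flP xP(1)] by blast
    then show False using yP t_tt[OF X(3,4)] unfolding z_def by simp
  qed
  have zQ: "z \<notin> Q"
  proof
    assume "z \<in> Q" then have "t y z \<in> Q" using flat_t[OF flQ yQ(1)] by blast
    then show False using xQ t_tt2(2)[OF X(3,4)] unfolding z_def by simp
  qed
  have ncPi: "nc i x y" if "i \<in> L" for i
  proof -
    have "i \<noteq> x" using that xP by blast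
    moreover have "lin i x \<subseteq> P" using flat_lin_sub[OF flP] that LP xP by blast
    ultimately show ?thesis using that LX X yP unfolding nc_def by blast
  qed
  have lxy: "lin x y \<in> Ls" "x \<in> lin x y" "y \<in> lin x y" using lin_prop[OF X(3,4) xy] by auto
  have iPi: "isP (H i x y)" if "i \<in> L" for i using isP_H ncPi that by blast
  have Pi_lxy: "lin x y \<subseteq> H i x y" "i \<notin> lin x y" "i \<in> H i x y" if "i \<in> L" for i
  proof -
    show "lin x y \<subseteq> H i x y" by (rule flat_lin_sub[OF H_flat[OF LX[OF that] X(3,4)] H_in(2,3)])
    show "i \<in> H i x y" by (rule H_in)
    show "i \<notin> lin x y"
    proof
      assume h: "i \<in> lin x y"
      have "i \<noteq> x" using that xP by blast
      then have "lin x y = lin x i" using lin_two[OF X(3) LX[OF that] _ X(3,4) lxy(2) h xy] by simp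
      moreover have "lin x i \<subseteq> P" using flat_lin_sub[OF flP] that LP xP by blast
      ultimately show False using lxy yP by blast
    qed
  qed
  have Pi7: "t (t i x) (t i y) = z" if "i \<in> L" "card (H i x y) = 7" for i
    using F1[OF iPi[OF that(1)] that(2) lxy(1) Pi_lxy(1)[OF that(1)] lxy(2,3) xy Pi_lxy(3,2)[OF that(1)]]
    unfolding z_def .
  have Pi9: "t (t i x) (t i y) = t i z" if "i \<in> L" "card (H i x y) = 9" for i
    using A1[OF iPi[OF that(1)] that(2) lxy(1) Pi_lxy(1)[OF that(1)] lxy(2,3) xy Pi_lxy(3,2)[OF that(1)]]
    unfolding z_def .
  have Pj9: "t z (t j x) = t x (t j y)" if "j \<in> L" "card (H j x y) = 9" for j
  proof -
    have jX: "j \<in> X" using LX that by blast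
    have jy: "j \<noteq> y" using that yQ by blast
    have l: "lin j y \<in> Ls" "j \<in> lin j y" "y \<in> lin j y" using lin_prop[OF jX X(4) jy] by auto
    have sub: "lin j y \<subseteq> H j x y" by (rule flat_lin_sub[OF H_flat[OF jX X(3,4)] H_in(1,3)])
    have "lin j y \<subseteq> Q" using flat_lin_sub[OF flQ] that LP yQ by blast
    then have xn: "x \<notin> lin j y" using xQ by blast
    have "t (t x j) (t x y) = t x (t j y)" using A1[OF iPi[OF that(1)] that(2) l(1) sub l(2,3) jy _ xn] H_in by blast
    then show ?thesis unfolding z_def using t_sym[of x j] t_sym[of "t j x" "t x y"] by simp
  qed
  have Pj7: "t z (t j x) = t j y" if "j \<in> L" "card (H j x y) = 7" for j
  proof -
    have "t (t j x) (t j y) = z" by (rule Pi7[OF that])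
    then have "t (t j x) z = t j y" using t_swap(1)[OF xiX[OF that(1)] yiX[OF that(1)]] by blast
    then show ?thesis using t_sym[of "t j x" z] by simp
  qed
  have ayby: "t a y \<noteq> t b y" using t_inj2[OF X(4) X(1,2) ab] .
  have ncR: "nc x (t a y) (t b y)"
  proof -
    have "lin (t a y) (t b y) \<subseteq> Q" using flat_lin_sub[OF flQ] yiQ L by blast
    then have "x \<notin> lin (t a y) (t b y)" using xQ by blast
    then show ?thesis using nc_perm(3)[of "t a y" "t b y" x] yiX L X ayby unfolding nc_def by blast
  qed
  define R where "R = H x (t a y) (t b y)"
  have flR: "flat X Ls R" unfolding R_def using H_flat nc_X[OF ncR] by blast
  have yR: "t i y \<in> R" if "i \<in> L" for i
  proof -
    have ay: "t a y \<in> R" "t b y \<in> R" "x \<in> R" unfolding R_def using H_in by auto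
    have "t (t a y) (t b y) = t y c" using Qy[OF L(2,3) ab] unfolding c_def .
    then have "t c y \<in> R" using flat_t[OF flR ay(1,2)] t_sym[of y c] by simp
    then show ?thesis using that ay Lc(1) by blast
  qed
  have xR: "x \<in> R" unfolding R_def using H_in by auto
  have wR: "t x (t i y) \<in> R" if "i \<in> L" for i using flat_t[OF flR xR yR[OF that]] .
  have betaR: "t z (t j x) \<in> R" if "j \<in> L" for j
    using PC[OF iPi[OF that]] Pj7[OF that] Pj9[OF that] yR[OF that] wR[OF that] by auto
  have R1: False if "i \<in> L" "i \<in> R" for i
  proof -
    have iX: "i \<in> X" using LX that by blast
    have "t i (t i y) \<in> R" using flat_t[OF flR that(2) yR[OF that(1)]] .
    then have yR': "y \<in> R" using t_tt[OF iX X(4)] by simp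
    define j where "j = (if i = a then b else a)"
    have j: "j \<in> L" "j \<noteq> i" unfolding j_def using L ab by auto
    have jX: "j \<in> X" using LX j by blast
    have "t y (t j y) \<in> R" using flat_t[OF flR yR' yR[OF j(1)]] .
    then have jR: "j \<in> R" using t_tt2(2)[OF jX X(4)] by simp
    have lij: "lin i j = L" using lin_uniq[OF L(1) that(1) j(1) j(2)[symmetric]] .
    have ncij: "nc i j y" using iX jX X yQ j lij unfolding nc_def by auto
    have "H i j y = R" unfolding R_def by (rule PE[OF ncR _ _ _ ncij]) (use that jR yR' R_def in auto)
    moreover have "H i j y = Q" unfolding Q_def by (rule PE[OF ny _ _ _ ncij]) (use that j LP yQ Q_def in auto)
    ultimately show False using xR xQ by simp
  qed
  have R3: False if "i \<in> L" "t i x \<in> R" for i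
  proof -
    have iX: "i \<in> X" using LX that by blast
    have "t x (t i x) \<in> R" using flat_t[OF flR xR that(2)] .
    then have "i \<in> R" using t_tt2(2)[OF iX X(3)] by simp
    then show False using R1 that by blast
  qed
  have Key: "card (H i x y) = 7" if ijk: "i \<in> L" "j \<in> L" "k \<in> L" "i \<noteq> j" "i \<noteq> k" "j \<noteq> k" for i j k
  proof -
    have iX: "i \<in> X" using LX ijk by blast
    have xjk: "t (t j x) (t k x) = i" using Px[OF ijk(2,3,6)] third[OF ijk] by simp
    have xjne: "i \<noteq> t j x" using xL ijk by blast
    have xjX: "t j x \<in> X" "t k x \<in> X" using xiX ijk by auto
    have xjkne: "t j x \<noteq> t k x" using t_inj2[OF X(3) LX[OF ijk(2)] LX[OF ijk(3)] ijk(6)] .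
    have ll: "lin i (t j x) \<in> Ls" "i \<in> lin i (t j x)" "t j x \<in> lin i (t j x)" using lin_prop[OF iX xjX(1) xjne] by auto
    have "lin i (t j x) \<subseteq> P" using flat_lin_sub[OF flP] xiP ijk LP by blast
    then have zn: "z \<notin> lin i (t j x)" using zP by blast
    have ncZ: "nc i (t j x) z" using iX xjX zX xjne zn unfolding nc_def by blast
    have iZ: "isP (H i (t j x) z)" by (rule isP_H[OF ncZ])
    have lZ: "lin i (t j x) \<subseteq> H i (t j x) z" using lin_sub_H iX xjX zX by blast
    have "t (t j x) i = t k x" using t_swap(1)[OF xjX xjk] .
    then have xkl: "t k x \<in> lin i (t j x)" using t_in[OF xjX(1) iX] lin_sym[of i "t j x"] by simp
    have zZ: "z \<in> H i (t j x) z" by (rule H_in)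
    have bR: "t z (t j x) \<in> R" "t z (t k x) \<in> R" using betaR ijk by auto
    show ?thesis
    proof (cases "card (H i (t j x) z) = 7")
      case True
      have "t (t z (t j x)) (t z (t k x)) = t (t j x) (t k x)"
        by (rule F1[OF iZ True ll(1) lZ ll(3) xkl xjkne zZ zn])
      then have "i \<in> R" using flat_t[OF flR bR] xjk by simp
      then show ?thesis using R1 ijk by blast
    next
      case False
      then have c9': "card (H i (t j x) z) = 9" using PC[OF iZ] by blast
      have "t (t z (t j x)) (t z (t k x)) = t z (t (t j x) (t k x))"
        by (rule A1[OF iZ c9' ll(1) lZ ll(3) xkl xjkne zZ zn])
      then have ziR: "t z i \<in> R" using flat_t[OF flR bR] xjk by simp
      show ?thesis
      proof (rule ccontr)
        assume "card (H i x y) \<noteq> 7"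
        then have "card (H i x y) = 9" using PC[OF iPi[OF ijk(1)]] by blast
        then have "t (t i x) (t i y) = t z i" using Pi9[OF ijk(1)] t_sym[of i z] by simp
        then have "t (t z i) (t i y) = t i x" using t_swap(4)[OF xiX[OF ijk(1)] yiX[OF ijk(1)]] by blast
        then have "t i x \<in> R" using flat_t[OF flR ziR yR[OF ijk(1)]] by simp
        then show False using R3 ijk by blast
      qed
    qed
  qed
  have Ka: "card (H a x y) = 7" using Key[of a b c] L Lc ab by auto
  have Kb: "card (H b x y) = 7" using Key[of b a c] L Lc ab by auto
  have za: "t (t a x) (t a y) = z" using Pi7 Ka L by blast
  have zb: "t (t b x) (t b y) = z" using Pi7 Kb L by blast
  have axbx: "t a x \<noteq> t b x" using t_inj2[OF X(3) X(1,2) ab] .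
  have "lin (t a x) (t b x) \<subseteq> P" using flat_lin_sub[OF flP] xiP L by blast
  then have ncG: "nc (t a x) (t b x) z" using zP zX xiX L axbx unfolding nc_def by blast
  define Gm where "Gm = H (t a x) (t b x) z"
  have flG: "flat X Ls Gm" unfolding Gm_def using H_flat nc_X[OF ncG] by blast
  have Gin: "t a x \<in> Gm" "t b x \<in> Gm" "z \<in> Gm" unfolding Gm_def by (rule H_in)+
  have "t (t a x) z = t a y" using t_swap(1)[OF xiX yiX za] L by blast
  then have Gya: "t a y \<in> Gm" using flat_t[OF flG Gin(1,3)] by simp
  have "t (t b x) z = t b y" using t_swap(1)[OF xiX yiX zb] L by blast
  then have Gyb: "t b y \<in> Gm" using flat_t[OF flG Gin(2,3)] by simp
  have "t (t a x) (t b x) = c" using Px[OF L(2,3) ab] unfolding c_def .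
  then have Gc: "c \<in> Gm" using flat_t[OF flG Gin(1,2)] by simp
  have ncQ: "nc (t a y) (t b y) c"
  proof -
    have "t (t a y) (t b y) = t y c" using Qy[OF L(2,3) ab] unfolding c_def .
    moreover have "lin (t a y) (t b y) = {t a y, t b y, t (t a y) (t b y)}" by (rule lin_explicit[OF yiX[OF L(2)] yiX[OF L(3)]])
    ultimately have "lin (t a y) (t b y) = {t a y, t b y, t c y}" using t_sym[of y c] by simp
    have cL: "c \<in> L" using Lc by blast
    have "t a y \<notin> L" "t b y \<notin> L" "t c y \<notin> L" using yL[OF L(2)] yL[OF L(3)] yL[OF cL] .
    then have "c \<noteq> t a y" "c \<noteq> t b y" "c \<noteq> t c y" using cL by auto
    then have "c \<notin> lin (t a y) (t b y)" using \<open>lin (t a y) (t b y) = {t a y, t b y, t c y}\<close> by simp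
    then show ?thesis using yiX L cX ayby unfolding nc_def by blast
  qed
  have "H (t a y) (t b y) c = Gm" unfolding Gm_def by (rule PE[OF ncG _ _ _ ncQ]) (use Gya Gyb Gc Gm_def in auto)
  moreover have "H (t a y) (t b y) c = Q" unfolding Q_def
    by (rule PE[OF ny _ _ _ ncQ]) (use yiQ L Lc LP Q_def in auto)
  ultimately have "t a x \<in> Q" using Gin by simp
  then show False using PQ xiP xL L by blast
qed


lemma SAME2: assumes "nc a b x" "nc a b y" shows "card (H a b x) = card (H a b y)"
proof -
  have "card (H a b x) = 7 \<or> card (H a b x) = 9" "card (H a b y) = 7 \<or> card (H a b y) = 9"
    using PC isP_H assms by blast+
  then show ?thesis using U[OF assms(1,2)] U[OF assms(2,1)] by auto
qed

lemma L_pt: assumes nc: "nc a b c" and d: "d \<in> X" shows "\<exists>u v. nc d u v \<and> card (H d u v) = card (H a b c)"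
proof (cases "d \<in> H a b c")
  case True
  then show ?thesis using EXa[OF nc True] by metis
next
  case False
  have X: "a \<in> X" "b \<in> X" "c \<in> X" using nc_X[OF nc] by auto
  have "d \<notin> lin a b" using False lin_sub_H[OF X] by blast
  then have nd: "nc a b d" using nc X d unfolding nc_def by blast
  have "card (H a b d) = card (H a b c)" using SAME2[OF nd nc] .
  moreover have "H d a b = H a b d" by (rule H_eq_set) auto
  ultimately show ?thesis using nc_perm(3)[OF nd] by metis
qed

lemma L_line: assumes nc: "nc a b c" and d: "d \<in> X" "e \<in> X" "d \<noteq> e"
  shows "\<exists>w. nc d e w \<and> card (H d e w) = card (H a b c)"
proof -
  obtain u v where uv: "nc d u v" "card (H d u v) = card (H a b c)" using L_pt[OF nc d(1)] by blast
  show ?thesis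
  proof (cases "e \<in> H d u v")
    case True
    then show ?thesis using EXb[OF uv(1) True d(3)[symmetric]] uv(2) by metis
  next
    case False
    have X: "d \<in> X" "u \<in> X" "v \<in> X" using nc_X[OF uv(1)] by auto
    have "e \<notin> lin d u" using False lin_sub_H[OF X] by blast
    then have ne: "nc d u e" using uv(1) X d unfolding nc_def by blast
    have "card (H d u e) = card (H d u v)" using SAME2[OF ne uv(1)] .
    moreover have "H d e u = H d u e" by (rule H_eq_set) auto
    ultimately show ?thesis using nc_perm(2)[OF ne] uv(2) by metis
  qed
qed

lemma SAME: assumes "nc a b c" "nc d e f" shows "card (H a b c) = card (H d e f)"
proof -
  have X: "d \<in> X" "e \<in> X" "d \<noteq> e" using nc_X[OF assms(2)] nc_ne[OF assms(2)] by auto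
  obtain w where w: "nc d e w" "card (H d e w) = card (H a b c)" using L_line[OF assms(1) X] by blast
  then show ?thesis using SAME2[OF w(1) assms(2)] by simp
qed

lemma par_gen: assumes all: "\<And>P. isP P \<Longrightarrow> card P = 7 + 2 * k" shows "parallel X Ls k"
  unfolding parallel_def
proof (intro allI impI)
  fix P L x assume h: "plane X Ls P \<and> L \<in> Ls \<and> L \<subseteq> P \<and> x \<in> P - L"
  have iP: "isP P" using plane_H h unfolding isP_def by blast
  have "finite (par P L x)" "card P = 7 + 2 * card (par P L x)" using CNT[OF iP] h by auto
  then show "finite {\<Lambda> \<in> Ls. x \<in> \<Lambda> \<and> \<Lambda> \<subseteq> P - L} \<and> card {\<Lambda> \<in> Ls. x \<in> \<Lambda> \<and> \<Lambda> \<subseteq> P - L} = k"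
    using all[OF iP] unfolding par_def by simp
qed

lemma sub_lin: assumes "c \<in> X" "x \<in> X" "y \<in> X" "c \<noteq> x" "y \<in> lin c x" shows "lin x y \<subseteq> lin c x"
proof (cases "x = y")
  case True then show ?thesis using lin_in[OF assms(1,2)] by simp
next
  case False
  have "lin c x = lin x y" using lin_two[OF assms(2,3) False assms(1,2) _ assms(5) assms(4)] lin_in[OF assms(1,2)] by blast
  then show ?thesis by simp
qed

lemma proj: assumes all7: "\<And>P. isP P \<Longrightarrow> card P = 7" shows "projective X Ls"
  unfolding projective_def
proof (intro ballI)
  fix c x y p v assume cxy: "c \<in> X" "x \<in> X" "y \<in> X" and p: "p \<in> lin x y" and v: "v \<in> lin c y - {p}"
  have pX: "p \<in> X" using lin_X'[OF cxy(2,3) p] .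
  have vX: "v \<in> X" using lin_X'[OF cxy(1,3)] v by blast
  have vp: "v \<noteq> p" using v by blast
  have inv: "v \<in> lin v p" "p \<in> lin v p" using lin_in[OF vX pX] by auto
  show "lin v p \<inter> lin c x \<noteq> {}"
  proof (cases "v \<in> lin c x \<or> p \<in> lin c x")
    case True then show ?thesis using inv by blast
  next
    case False
    then have nv: "v \<notin> lin c x" "p \<notin> lin c x" by auto
    show ?thesis
    proof (cases "c = x")
      case True
      have cy: "c \<noteq> y" using v True nv by auto
      have "v \<in> lin c y" "p \<in> lin c y" using v p True by auto
      then have "lin v p = lin c y" using lin_eq2[OF cxy(1,3) cy _ _ vp] by blast
      then show ?thesis using lin_in[OF cxy(1,3)] lin_in[OF cxy(1,2)] by blast
    next
      case False
      have yn: "y \<notin> lin c x" using sub_lin[OF cxy False] p nv(2) by blast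
      have ncp: "nc c x y" using cxy False yn unfolding nc_def by blast
      define Pl where "Pl = H c x y"
      have iP: "isP Pl" unfolding Pl_def by (rule isP_H[OF ncp])
      have flP: "flat X Ls Pl" using isP_basic[OF iP] by blast
      have l: "lin c x \<in> Ls" using lin_prop[OF cxy(1,2) False] by blast
      have lP: "lin c x \<subseteq> Pl" unfolding Pl_def by (rule lin_sub_H[OF cxy])
      have "lin c y \<subseteq> Pl" "lin x y \<subseteq> Pl" unfolding Pl_def using flat_lin_sub[OF H_flat[OF cxy]] H_in by blast+
      then have vP: "v \<in> Pl" "p \<in> Pl" using v p by auto
      have "par Pl (lin c x) v = {}" by (rule par7[OF iP all7[OF iP] l lP vP(1) nv(1)])
      moreover have "lin v p \<in> Ls" using lin_prop[OF vX pX vp] by blast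
      moreover have "lin v p \<subseteq> Pl" using flat_lin_sub[OF flP vP] .
      ultimately have "\<not> lin v p \<subseteq> Pl - lin c x" using inv unfolding par_def by blast
      then show ?thesis using \<open>lin v p \<subseteq> Pl\<close> by blast
    qed
  qed
qed

lemma aff: assumes all9: "\<And>P. isP P \<Longrightarrow> card P = 9" shows "affine X Ls"
  unfolding affine_def
proof (intro ballI)
  fix c x y p assume cxy: "c \<in> X" "x \<in> X" "y \<in> X" and p: "p \<in> lin x y - lin c x"
  have pX: "p \<in> X" using lin_X'[OF cxy(2,3)] p by blast
  have pn: "p \<notin> lin c x" using p by blast
  show "\<exists>u\<in>lin c y. \<forall>v\<in>lin c y. (u = v) = (lin v p \<inter> lin c x = {})"
  proof (cases "c = x")
    case True
    have pc: "p \<noteq> c" using pn True by simp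
    have pm: "p \<in> lin c y" using p True by blast
    have cy: "c \<noteq> y" using pm pc by auto
    show ?thesis
    proof (intro bexI[OF _ pm] ballI)
      fix v assume vm: "v \<in> lin c y"
      show "(p = v) = (lin v p \<inter> lin c x = {})"
      proof (cases "v = p")
        case True then show ?thesis using pc \<open>c = x\<close> by simp
      next
        case False
        then have "lin v p = lin c y" using lin_eq2[OF cxy(1,3) cy vm pm] by blast
        then show ?thesis using False lin_in[OF cxy(1,3)] \<open>c = x\<close> by auto
      qed
    qed
  next
    case False
    have yn: "y \<notin> lin c x" using sub_lin[OF cxy False] p by blast
    have ncp: "nc c x y" using cxy False yn unfolding nc_def by blast
    define Pl where "Pl = H c x y"
    have iP: "isP Pl" unfolding Pl_def by (rule isP_H[OF ncp])
    have flP: "flat X Ls Pl" using isP_basic[OF iP] by blast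
    have l: "lin c x \<in> Ls" "c \<in> lin c x" using lin_prop[OF cxy(1,2) False] by blast+
    have lP: "lin c x \<subseteq> Pl" unfolding Pl_def by (rule lin_sub_H[OF cxy])
    have cy: "c \<noteq> y" using yn l(2) by blast
    have m: "lin c y \<in> Ls" "c \<in> lin c y" "y \<in> lin c y" using lin_prop[OF cxy(1,3) cy] by blast+
    have "lin c y \<subseteq> Pl" "lin x y \<subseteq> Pl" unfolding Pl_def using flat_lin_sub[OF H_flat[OF cxy]] H_in by blast+
    then have mP: "lin c y \<subseteq> Pl" and pP: "p \<in> Pl" using p by auto
    obtain \<Lambda> where Lm: "par Pl (lin c x) p = {\<Lambda>}" using par9[OF iP all9[OF iP] l(1) lP pP pn] by blast
    have L': "\<Lambda> \<in> Ls" "p \<in> \<Lambda>" "\<Lambda> \<subseteq> Pl - lin c x" using Lm unfolding par_def by blast+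
    show ?thesis
    proof (cases "p \<in> lin c y")
      case True
      show ?thesis
      proof (intro bexI[OF _ True] ballI)
        fix v assume vm: "v \<in> lin c y"
        show "(p = v) = (lin v p \<inter> lin c x = {})"
        proof (cases "v = p")
          case True then show ?thesis using pn by simp
        next
          case False
          then have "lin v p = lin c y" using lin_eq2[OF cxy(1,3) cy vm \<open>p \<in> lin c y\<close>] by blast
          then show ?thesis using False m(2) l(2) by auto
        qed
      qed
    next
      case pm: False
      have meet: "\<Lambda> \<inter> lin c y \<noteq> {}"
      proof
        assume dj: "\<Lambda> \<inter> lin c y = {}"
        have cP: "c \<in> Pl" "c \<notin> \<Lambda>" using lP l(2) L'(3) by blast+
        obtain M where M: "par Pl \<Lambda> c = {M}" using par9[OF iP all9[OF iP] L'(1) _ cP] L'(3) by blast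
        have "lin c x \<in> par Pl \<Lambda> c" unfolding par_def using l lP L'(3) by blast
        moreover have "lin c y \<in> par Pl \<Lambda> c" unfolding par_def using m mP dj by blast
        ultimately have "lin c x = lin c y" using M by blast
        then show False using m(3) yn by simp
      qed
      then obtain u where u: "u \<in> \<Lambda>" "u \<in> lin c y" by blast
      have up: "u \<noteq> p" using u pm by blast
      have uX: "u \<in> X" using u m(1) line_sub by blast
      show ?thesis
      proof (intro bexI[OF _ u(2)] ballI)
        fix v assume vm: "v \<in> lin c y"
        have vX: "v \<in> X" using vm m(1) line_sub by blast
        have vp: "v \<noteq> p" using vm pm by blast
        show "(u = v) = (lin v p \<inter> lin c x = {})"
        proof
          assume "u = v"
          then have "lin v p = \<Lambda>" using lin_uniq[OF L'(1) u(1) L'(2)] up by simp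
          then show "lin v p \<inter> lin c x = {}" using L'(3) by blast
        next
          assume dj: "lin v p \<inter> lin c x = {}"
          have lv: "lin v p \<in> Ls" "v \<in> lin v p" "p \<in> lin v p" using lin_prop[OF vX pX vp] by blast+
          have "lin v p \<subseteq> Pl" using flat_lin_sub[OF flP] vm mP pP by blast
          then have "lin v p \<in> par Pl (lin c x) p" unfolding par_def using lv dj by blast
          then have "lin v p = \<Lambda>" using Lm by blast
          then have vL: "v \<in> \<Lambda>" using lv by simp
          show "u = v"
          proof (rule ccontr)
            assume "u \<noteq> v"
            then have "\<Lambda> = lin c y" using lin_eqI[OF L'(1) u(1) vL _ m(1) u(2) vm] by blast
            then show False using L'(2) pm by simp
          qed
        qed
      qed
    qed
  qed
qed

lemma main: "(\<exists>p\<in>{0, 1}. parallel X Ls p) \<and> (projective X Ls \<or> affine X Ls)"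
proof (cases "\<exists>a b p. nc a b p \<and> card (H a b p) = 9")
  case True
  then obtain a b p where abp: "nc a b p" "card (H a b p) = 9" by blast
  have all9: "card P = 9" if iP: "isP P" for P
  proof -
    obtain d e f where "nc d e f" "P = H d e f" using iP unfolding isP_def by blast
    then show ?thesis using SAME[OF abp(1)] abp(2) by simp
  qed
  have "parallel X Ls 1" by (rule par_gen) (simp add: all9)
  moreover have "affine X Ls" by (rule aff[OF all9])
  ultimately show ?thesis by blast
next
  case False
  have all7: "card P = 7" if iP: "isP P" for P
  proof -
    obtain d e f where "nc d e f" "P = H d e f" using iP unfolding isP_def by blast
    then show ?thesis using PC[OF iP] False by blast
  qed
  have "parallel X Ls 0" by (rule par_gen) (simp add: all7)
  moreover have "projective X Ls" by (rule proj[OF all7])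
  ultimately show ?thesis by blast
qed

end

theorem theorem4p2p7:
  fixes X :: "'a set" and Ls :: "'a set set"
  assumes "liner X Ls" and "steiner Ls" and "three_regular X Ls"
  shows "(\<exists>p\<in>{0, 1}. parallel X Ls p) \<and> (projective X Ls \<or> affine X Ls)"
proof -
  interpret SL X Ls using assms by unfold_locales
  show ?thesis by (rule main)
qed

end
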